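(* Let $R$ be a commutative ring and $n$ a positive integer. Then the formal power series ring $R[[x]]$ is $n$-strongly clean if and only if $R$ is $n$-strongly clean.
   Context: All rings are associative with identity. For a positive integer $n$, an element $x \in R$ is $n$-strongly clean if $x = e + u_1 + \cdots + u_n$ where $e^2=e$, $u_1,\dots,u_n$ are units of $R$, and $eu_i = u_i e$ for all $i$; $R$ is $n$-strongly clean if every element of $R$ is $n$-strongly clean. *)

theory Defs
  imports "HOL-Computational_Algebra.Formal_Power_Series"
begin

definition ring_unit :: "'a::ring_1 \<Rightarrow> bool" where
  "ring_unit u \<longleftrightarrow> (\<exists>v. u * v = 1 \<and> v * u = 1)"

text \<open>x is n-strongly clean: x = e + u_1 + ... + u_n with e idempotent,
  the u_i units, and e commuting with each u_i (indices 0..n-1 here).\<close>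
definition n_strongly_clean_elem :: "nat \<Rightarrow> 'a::ring_1 \<Rightarrow> bool" where
  "n_strongly_clean_elem n x \<longleftrightarrow>
     (\<exists>e u. e * e = e \<and> (\<forall>i<n. ring_unit (u i) \<and> e * u i = u i * e)
            \<and> x = e + (\<Sum>i<n. u i))"

definition n_strongly_clean_ring :: "nat \<Rightarrow> 'a::ring_1 itself \<Rightarrow> bool" where
  "n_strongly_clean_ring n _ \<longleftrightarrow> (\<forall>x::'a. n_strongly_clean_elem n x)"

end

theory Submission
  imports Defs
begin

lemma fps_sum_nth': "fps_nth (sum f S) k = (\<Sum>i\<in>S. fps_nth (f i) k)"
  by (induction S rule: infinite_finite_induct) auto

lemma fps_const_sum': "fps_const (\<Sum>i\<in>S. f i) = (\<Sum>i\<in>S. fps_const (f i) :: 'a::comm_ring_1 fps)"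
  by (induction S rule: infinite_finite_induct) (auto simp: fps_const_add[symmetric])

lemma fps_unit:
  fixes f :: "'a::comm_ring_1 fps"
  assumes "ring_unit (fps_nth f 0)"
  shows "ring_unit f"
proof -
  from assms obtain v where v: "fps_nth f 0 * v = 1" "v * fps_nth f 0 = 1" unfolding ring_unit_def by blast
  show ?thesis unfolding ring_unit_def
    using fps_right_inverse[OF v(1)] fps_left_inverse'[OF v(2) v(1)] by blast
qed

theorem proposition1p5:
  fixes n :: nat
  assumes "n \<ge> 1"
  shows "n_strongly_clean_ring n TYPE('a::comm_ring_1 fps) \<longleftrightarrow>
         n_strongly_clean_ring n TYPE('a)"
proof
  assume H: "n_strongly_clean_ring n TYPE('a fps)"
  show "n_strongly_clean_ring n TYPE('a)"
    unfolding n_strongly_clean_ring_def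
  proof
    fix r :: 'a
    from H obtain E U where EU: "E * E = E" "\<forall>i<n. ring_unit (U i) \<and> E * U i = U i * E"
        "fps_const r = E + (\<Sum>i<n. U i)"
      unfolding n_strongly_clean_ring_def n_strongly_clean_elem_def by blast
    have "fps_nth (E*E) 0 = fps_nth E 0" using EU(1) by simp
    hence e: "fps_nth E 0 * fps_nth E 0 = fps_nth E 0" by simp
    have u: "ring_unit (fps_nth (U i) 0)" if "i<n" for i
    proof -
      from EU(2) that obtain v where "U i * v = 1" "v * U i = 1" unfolding ring_unit_def by blast
      hence "fps_nth (U i * v) 0 = 1" "fps_nth (v * U i) 0 = 1" by simp_all
      thus ?thesis unfolding ring_unit_def by auto
    qed
    have "r = fps_nth (fps_const r) 0" by simp
    also have "\<dots> = fps_nth E 0 + (\<Sum>i<n. fps_nth (U i) 0)" using EU(3) by (simp add: fps_sum_nth')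
    finally have rr: "r = fps_nth E 0 + (\<Sum>i<n. fps_nth (U i) 0)" .
    show "n_strongly_clean_elem n r"
      unfolding n_strongly_clean_elem_def
      apply (rule_tac x="fps_nth E 0" in exI)
      apply (rule_tac x="\<lambda>i. fps_nth (U i) 0" in exI)
      using e u rr mult.commute by blast
  qed
next
  assume H: "n_strongly_clean_ring n TYPE('a)"
  show "n_strongly_clean_ring n TYPE('a fps)"
    unfolding n_strongly_clean_ring_def
  proof
    fix f :: "'a fps"
    from H obtain e u where eu: "e * e = e" "\<forall>i<n. ring_unit (u i)"
        "fps_nth f 0 = e + (\<Sum>i<n. u i)"
      unfolding n_strongly_clean_ring_def n_strongly_clean_elem_def by blast
    define g where "g = f - fps_const (fps_nth f 0)"
    define U where "U i = fps_const (u i) + (if i = 0 then g else 0)" for i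
    have "(\<Sum>i<n. U i) = (\<Sum>i<n. fps_const (u i)) + (\<Sum>i<n. (if i = 0 then g else 0))"
      unfolding U_def by (simp add: sum.distrib)
    also have "(\<Sum>i<n. (if i = 0 then g else 0)) = g"
      using assms by (simp add: sum.delta)
    also have "(\<Sum>i<n. fps_const (u i)) = fps_const (\<Sum>i<n. u i)"
      by (simp add: fps_const_sum')
    finally have s: "(\<Sum>i<n. U i) = fps_const (\<Sum>i<n. u i) + g" .
    have "f = fps_const e + (\<Sum>i<n. U i)"
    proof -
      have "fps_const (e + (\<Sum>i<n. u i)) = fps_const e + fps_const (\<Sum>i<n. u i)"
        by (metis fps_const_add)
      thus ?thesis unfolding s g_def eu(3) by (simp add: algebra_simps)
    qed
    moreover have "ring_unit (U i)" if "i<n" for i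
      by (rule fps_unit) (use eu(2) that in \<open>simp add: U_def g_def\<close>)
    moreover have "fps_const e * fps_const e = fps_const e"
      using eu(1) by (simp add: fps_const_mult)
    ultimately show "n_strongly_clean_elem n f"
      unfolding n_strongly_clean_elem_def
      apply (rule_tac x="fps_const e" in exI)
      apply (rule_tac x="U" in exI)
      using mult.commute by blast
  qed
qed

end
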